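(* Let $\phi$ be a formula. If there exists a closed term $M$ such that $M:\phi$ (with respect to $\Omega$), then $\phi$ is $\Lambda_{\mathrm{NF}}$-inhabited.
   Context: Formulas are built from propositional atoms with $\to$. Let $\mathcal X$ be a countably infinite set of variables with an injective map $\mathcal O:\mathcal X\to\mathbb N$; write $x<y$ iff $\mathcal O(x)<\mathcal O(y)$. Terms are terms of pure $\lambda$-calculus over $\mathcal X$, not identified up to $\alpha$-conversion; by convention two distinct $\lambda$'s never bind the same variable in a term and no variable is both free and bound in a term. $\mathrm{Free}(M)$ is the strictly increasing sequence of free variables of $M$. Hereditarily right-maximal (HRM) terms are defined inductively: every variable is HRM; if $M$ is HRM and $x$ is the greatest free variable of $M$, then $\lambda x.M$ is HRM; if $M,N$ are HRM and for each free variable $x$ of $M$ there is a free variable $y$ of $N$ with $x\le y$, then $(MN)$ is HRM. Fix a function $\Omega$ from variables to formulas such that $\Omega^{-1}(\phi)$ is infinite for every formula $\phi$. The judgment $M:\phi$ ("$M$ has type $\phi$") is defined by: $x:\Omega(x)$; if $x:\chi$, $M:\psi$ and $\lambda x.M$ is HRM then $\lambda x.M:\chi\to\psi$; if $M:\chi\to\psi$, $N:\chi$ and $(MN)$ is HRM then $(MN):\psi$. $\Lambda_{\mathrm{NF}}$ denotes the set of typed terms in $\beta$-normal form; a $\Lambda_{\mathrm{NF}}$-inhabitant of $\phi$ is a closed term of $\Lambda_{\mathrm{NF}}$ of type $\phi$, and $\phi$ is $\Lambda_{\mathrm{NF}}$-inhabited if it has one. *)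

theory Defs
  imports Main
begin

datatype 'a form = Atom 'a | Imp "'a form" "'a form"

text \<open>Raw (non alpha-quotiented) lambda terms over variables of type 'v.\<close>
datatype 'v trm = Var 'v | Lam 'v "'v trm" | App "'v trm" "'v trm"

fun fv :: "'v trm \<Rightarrow> 'v set" where
  "fv (Var x) = {x}"
| "fv (Lam x M) = fv M - {x}"
| "fv (App M N) = fv M \<union> fv N"

fun bvs :: "'v trm \<Rightarrow> 'v list" where
  "bvs (Var x) = []"
| "bvs (Lam x M) = x # bvs M"
| "bvs (App M N) = bvs M @ bvs N"

definition var_conv :: "'v trm \<Rightarrow> bool" where
  "var_conv M \<longleftrightarrow> distinct (bvs M) \<and> set (bvs M) \<inter> fv M = {}"

definition closed :: "'v trm \<Rightarrow> bool" where
  "closed M \<longleftrightarrow> fv M = {}"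

text \<open>Hereditarily right-maximal terms, w.r.t. the order x < y iff ord x < ord y.\<close>
inductive HRM :: "('v \<Rightarrow> nat) \<Rightarrow> 'v trm \<Rightarrow> bool" for ord where
  HRM_Var: "HRM ord (Var x)"
| HRM_Lam: "\<lbrakk>HRM ord M; x \<in> fv M; \<forall>y\<in>fv M. ord y \<le> ord x\<rbrakk> \<Longrightarrow> HRM ord (Lam x M)"
| HRM_App: "\<lbrakk>HRM ord M; HRM ord N; \<forall>x\<in>fv M. \<exists>y\<in>fv N. ord x \<le> ord y\<rbrakk>
             \<Longrightarrow> HRM ord (App M N)"

inductive has_type :: "('v \<Rightarrow> nat) \<Rightarrow> ('v \<Rightarrow> 'a form) \<Rightarrow> 'v trm \<Rightarrow> 'a form \<Rightarrow> bool"
  for ord \<Omega> where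
  ty_Var: "has_type ord \<Omega> (Var x) (\<Omega> x)"
| ty_Lam: "\<lbrakk>has_type ord \<Omega> (Var x) \<chi>; has_type ord \<Omega> M \<psi>; HRM ord (Lam x M)\<rbrakk>
           \<Longrightarrow> has_type ord \<Omega> (Lam x M) (Imp \<chi> \<psi>)"
| ty_App: "\<lbrakk>has_type ord \<Omega> M (Imp \<chi> \<psi>); has_type ord \<Omega> N \<chi>; HRM ord (App M N)\<rbrakk>
           \<Longrightarrow> has_type ord \<Omega> (App M N) \<psi>"

fun beta_normal :: "'v trm \<Rightarrow> bool" where
  "beta_normal (Var x) = True"
| "beta_normal (Lam x M) = beta_normal M"
| "beta_normal (App M N) = ((\<forall>x P. M \<noteq> Lam x P) \<and> beta_normal M \<and> beta_normal N)"

definition NF_inhabitant :: "('v \<Rightarrow> nat) \<Rightarrow> ('v \<Rightarrow> 'a form) \<Rightarrow> 'v trm \<Rightarrow> 'a form \<Rightarrow> bool" where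
  "NF_inhabitant ord \<Omega> M \<phi> \<longleftrightarrow> var_conv M \<and> closed M \<and> beta_normal M \<and> has_type ord \<Omega> M \<phi>"

definition NF_inhabited :: "('v \<Rightarrow> nat) \<Rightarrow> ('v \<Rightarrow> 'a form) \<Rightarrow> 'a form \<Rightarrow> bool" where
  "NF_inhabited ord \<Omega> \<phi> \<longleftrightarrow> (\<exists>M. NF_inhabitant ord \<Omega> M \<phi>)"

end

theory Submission
  imports Defs
begin

definition dominated :: "('v \<Rightarrow> nat) \<Rightarrow> 'v set \<Rightarrow> 'v set \<Rightarrow> bool" where
  "dominated ord A B \<longleftrightarrow> (\<forall>c\<in>A. \<exists>d\<in>B. ord c \<le> ord d)"

lemma finite_fv: "finite (fv M)"
  by (induction M) auto

lemma typed_HRM: "has_type ord \<Omega> M t \<Longrightarrow> HRM ord M"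
  by (induction rule: has_type.induct) (auto intro: HRM.intros)

inductive_cases tyVarE: "has_type ord \<Omega> (Var x) t"
inductive_cases tyLamE: "has_type ord \<Omega> (Lam x M) t"
inductive_cases tyAppE: "has_type ord \<Omega> (App M N) t"
lemma tyLam_inv: "has_type ord \<Omega> (Lam x M) t \<Longrightarrow>
  \<exists>\<chi> \<psi>. t = Imp \<chi> \<psi> \<and> \<Omega> x = \<chi> \<and> has_type ord \<Omega> M \<psi> \<and> HRM ord (Lam x M)"
  apply (erule tyLamE)
  apply (erule tyVarE)
  by blast

inductive_cases hrmLamE: "HRM ord (Lam x M)"
inductive_cases hrmAppE: "HRM ord (App M N)"

lemma fresh:
  fixes ord :: "'v \<Rightarrow> nat"
  assumes "inj ord" "\<forall>\<psi>. infinite (\<Omega> -` {\<psi>})" "finite A"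
  shows "\<exists>z. \<Omega> z = \<chi> \<and> z \<notin> A \<and> k < ord z"
proof -
  have "infinite (\<Omega> -` {\<chi>} - A)" using assms by auto
  hence "infinite (ord ` (\<Omega> -` {\<chi>} - A))"
    using assms(1) by (simp add: finite_image_iff inj_on_subset)
  then obtain m where "m \<in> ord ` (\<Omega> -` {\<chi>} - A)" "k < m"
    unfolding finite_nat_set_iff_bounded_le by (meson not_le)
  thus ?thesis by auto
qed

lemma fresh_big:
  fixes ord :: "'v \<Rightarrow> nat"
  assumes "inj ord" "\<forall>\<psi>. infinite (\<Omega> -` {\<psi>})" "finite A" "finite F"
  shows "\<exists>z. \<Omega> z = \<chi> \<and> z \<notin> A \<and> (\<forall>y\<in>F. ord y < ord z)"
proof -
  obtain z where z: "\<Omega> z = \<chi>" "z \<notin> A" "(\<Sum>y\<in>F. ord y) < ord z"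
    using fresh[OF assms(1,2,3)] by blast
  have "\<forall>y\<in>F. ord y < ord z"
  proof
    fix y assume "y \<in> F"
    hence "ord y \<le> (\<Sum>y\<in>F. ord y)" using assms(4) by (intro member_le_sum) auto
    thus "ord y < ord z" using z(3) by linarith
  qed
  thus ?thesis using z by blast
qed

definition good_sub where
  "good_sub ord \<Omega> n P \<sigma> \<longleftrightarrow>
     (\<forall>v\<in>fv P. has_type ord \<Omega> (\<sigma> v) (\<Omega> v) \<and> beta_normal (\<sigma> v) \<and>
        ((\<forall>w. \<sigma> v \<noteq> Var w) \<longrightarrow> size (\<Omega> v) \<le> n)) \<and>
     (\<forall>a\<in>fv P. \<forall>b\<in>fv P. ord a \<le> ord b \<longrightarrow> dominated ord (fv (\<sigma> a)) (fv (\<sigma> b)))"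

definition SUBST where
  "SUBST ord \<Omega> n \<longleftrightarrow> (\<forall>P \<psi> \<sigma>. beta_normal P \<longrightarrow> has_type ord \<Omega> P \<psi> \<longrightarrow> good_sub ord \<Omega> n P \<sigma> \<longrightarrow>
     (\<exists>R. beta_normal R \<and> has_type ord \<Omega> R \<psi> \<and> fv R = (\<Union>v\<in>fv P. fv (\<sigma> v)) \<and>
        ((\<exists>y S. R = Lam y S) \<longrightarrow> (\<exists>y S. P = Lam y S) \<or> size \<psi> \<le> n)))"

lemma redex:
  assumes inj: "inj ord" and S: "SUBST ord \<Omega> n" and sz: "size \<chi> \<le> n"
    and nS: "beta_normal S" and tL: "has_type ord \<Omega> (Lam y S) (Imp \<chi> \<psi>)"
    and nR: "beta_normal R2" and tR: "has_type ord \<Omega> R2 \<chi>"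
    and dm: "dominated ord (fv (Lam y S)) (fv R2)"
  shows "\<exists>R. beta_normal R \<and> has_type ord \<Omega> R \<psi> \<and> fv R = fv (Lam y S) \<union> fv R2"
proof -
  from tyLam_inv[OF tL] have oy: "\<Omega> y = \<chi>" and tS: "has_type ord \<Omega> S \<psi>" and hL: "HRM ord (Lam y S)"
    by auto
  from hL have yin: "y \<in> fv S" and ymax: "\<forall>w\<in>fv S. ord w \<le> ord y"
    by (auto elim: hrmLamE)
  define \<sigma> where "\<sigma> = (Var :: _ \<Rightarrow> _ trm)(y := R2)"
  have g: "good_sub ord \<Omega> n S \<sigma>"
    unfolding good_sub_def
  proof (intro conjI ballI impI)
    fix v assume "v \<in> fv S"
    show "has_type ord \<Omega> (\<sigma> v) (\<Omega> v)" using tR oy by (auto simp: \<sigma>_def intro: ty_Var)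
    show "beta_normal (\<sigma> v)" using nR by (auto simp: \<sigma>_def)
    show "(\<forall>w. \<sigma> v \<noteq> Var w) \<Longrightarrow> size (\<Omega> v) \<le> n" using sz oy
      by (cases "v = y") (auto simp: \<sigma>_def)
  next
    fix a b assume a: "a \<in> fv S" and b: "b \<in> fv S" and ab: "ord a \<le> ord b"
    show "dominated ord (fv (\<sigma> a)) (fv (\<sigma> b))"
    proof (cases "b = y")
      case True
      show ?thesis
      proof (cases "a = y")
        case True then show ?thesis using \<open>b = y\<close> by (auto simp: dominated_def)
      next
        case False
        then have "a \<in> fv (Lam y S)" using a by simp
        then show ?thesis using dm False True by (auto simp: \<sigma>_def dominated_def)
      qed
    next
      case False
      have "a \<noteq> y"
      proof
        assume "a = y"
        then have "ord b = ord y" using ab ymax b by force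
        then show False using inj False by (auto dest: injD)
      qed
      then show ?thesis using False ab by (auto simp: \<sigma>_def dominated_def)
    qed
  qed
  obtain R where R: "beta_normal R" "has_type ord \<Omega> R \<psi>" "fv R = (\<Union>v\<in>fv S. fv (\<sigma> v))"
    using S[unfolded SUBST_def, rule_format, OF nS tS g] by blast
  have "(\<Union>v\<in>fv S. fv (\<sigma> v)) = fv (Lam y S) \<union> fv R2"
    using yin by (auto simp: \<sigma>_def split: if_splits)
  thus ?thesis using R by auto
qed

lemma subst_all:
  assumes inj: "inj ord" and fib: "\<forall>\<psi>. infinite (\<Omega> -` {\<psi>})"
  shows "SUBST ord \<Omega> n"
proof (induction n rule: less_induct)
  case (less n)
  have main: "\<forall>\<psi> \<sigma>. beta_normal P \<longrightarrow> has_type ord \<Omega> P \<psi> \<longrightarrow> good_sub ord \<Omega> n P \<sigma> \<longrightarrow>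
     (\<exists>R. beta_normal R \<and> has_type ord \<Omega> R \<psi> \<and> fv R = (\<Union>v\<in>fv P. fv (\<sigma> v)) \<and>
        ((\<exists>y S. R = Lam y S) \<longrightarrow> (\<exists>y S. P = Lam y S) \<or> size \<psi> \<le> n))" for P
  proof (induction P)
    case (Var v)
    show ?case
    proof (intro allI impI)
      fix \<psi> \<sigma> assume n: "beta_normal (Var v)" and t: "has_type ord \<Omega> (Var v) \<psi>"
        and g: "good_sub ord \<Omega> n (Var v) \<sigma>"
      from t have psi: "\<psi> = \<Omega> v" by (auto elim: tyVarE)
      from g have g1: "has_type ord \<Omega> (\<sigma> v) (\<Omega> v)" "beta_normal (\<sigma> v)"
        "(\<forall>w. \<sigma> v \<noteq> Var w) \<longrightarrow> size (\<Omega> v) \<le> n"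
        unfolding good_sub_def by auto
      show "\<exists>R. beta_normal R \<and> has_type ord \<Omega> R \<psi> \<and> fv R = (\<Union>v\<in>fv (Var v). fv (\<sigma> v)) \<and>
        ((\<exists>y S. R = Lam y S) \<longrightarrow> (\<exists>y S. Var v = Lam y S) \<or> size \<psi> \<le> n)"
        by (rule exI[of _ "\<sigma> v"]) (use g1 psi in auto)
    qed
  next
    case (Lam z P0)
    show ?case
    proof (intro allI impI)
      fix \<psi> \<sigma> assume n: "beta_normal (Lam z P0)" and t: "has_type ord \<Omega> (Lam z P0) \<psi>"
        and g: "good_sub ord \<Omega> n (Lam z P0) \<sigma>"
      from t obtain \<chi> \<psi>0 where psi: "\<psi> = Imp \<chi> \<psi>0" and oz: "\<Omega> z = \<chi>"
        and t0: "has_type ord \<Omega> P0 \<psi>0" and h: "HRM ord (Lam z P0)"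
        using tyLam_inv[OF t] by blast
      from h have zin: "z \<in> fv P0" and zmax: "\<forall>w\<in>fv P0. ord w \<le> ord z"
        by (auto elim: hrmLamE)
      define F where "F = (\<Union>v\<in>fv (Lam z P0). fv (\<sigma> v))"
      have fF: "finite F" unfolding F_def using finite_fv by auto
      obtain z' where z': "\<Omega> z' = \<Omega> z" "z' \<notin> F" "\<forall>y\<in>F. ord y < ord z'"
        using fresh_big[OF inj fib fF fF] by blast
      define \<sigma>' where "\<sigma>' = \<sigma>(z := Var z')"
      have g': "good_sub ord \<Omega> n P0 \<sigma>'"
        unfolding good_sub_def
      proof (intro conjI ballI impI)
        fix v assume v: "v \<in> fv P0"
        show "has_type ord \<Omega> (\<sigma>' v) (\<Omega> v)"
          using g v z' by (cases "v = z") (auto simp: \<sigma>'_def good_sub_def intro: ty_Var[of ord \<Omega> z', simplified z'])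
        show "beta_normal (\<sigma>' v)" using g v by (auto simp: \<sigma>'_def good_sub_def)
        show "(\<forall>w. \<sigma>' v \<noteq> Var w) \<Longrightarrow> size (\<Omega> v) \<le> n" using g v
          by (cases "v = z") (auto simp: \<sigma>'_def good_sub_def)
      next
        fix a b assume a: "a \<in> fv P0" and b: "b \<in> fv P0" and ab: "ord a \<le> ord b"
        show "dominated ord (fv (\<sigma>' a)) (fv (\<sigma>' b))"
        proof (cases "b = z")
          case True
          show ?thesis
          proof (cases "a = z")
            case True then show ?thesis using \<open>b = z\<close> by (auto simp: dominated_def)
          next
            case False
            then have "fv (\<sigma> a) \<subseteq> F" using a by (auto simp: F_def)
            then show ?thesis using False True z'(3) by (auto simp: \<sigma>'_def dominated_def less_imp_le)
          qed
        next
          case False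
          have "a \<noteq> z"
          proof
            assume "a = z"
            then have "ord b = ord z" using ab zmax b by force
            then show False using inj False by (auto dest: injD)
          qed
          then show ?thesis using False ab g a b by (auto simp: \<sigma>'_def good_sub_def)
        qed
      qed
      from n have n0: "beta_normal P0" by simp
      obtain R0 where R0: "beta_normal R0" "has_type ord \<Omega> R0 \<psi>0"
        "fv R0 = (\<Union>v\<in>fv P0. fv (\<sigma>' v))"
        using Lam.IH[rule_format, OF n0 t0 g'] by (elim exE conjE) (rule that; assumption)
      have fR0: "fv R0 = insert z' F"
        using R0(3) zin by (auto simp: F_def \<sigma>'_def split: if_splits)
      have hR: "HRM ord (Lam z' R0)"
        using typed_HRM[OF R0(2)] fR0 z'(3) by (auto intro!: HRM_Lam simp: less_imp_le)
      have tR: "has_type ord \<Omega> (Lam z' R0) \<psi>"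
        unfolding psi
        by (rule ty_Lam) (use z' oz R0(2) hR in \<open>auto intro: ty_Var[of ord \<Omega> z', simplified]\<close>)
      show "\<exists>R. beta_normal R \<and> has_type ord \<Omega> R \<psi> \<and> fv R = (\<Union>v\<in>fv (Lam z P0). fv (\<sigma> v)) \<and>
        ((\<exists>y S. R = Lam y S) \<longrightarrow> (\<exists>y S. Lam z P0 = Lam y S) \<or> size \<psi> \<le> n)"
        by (rule exI[of _ "Lam z' R0"]) (use R0(1) tR fR0 z'(2) in \<open>auto simp: F_def\<close>)
    qed
  next
    case (App P1 P2)
    show ?case
    proof (intro allI impI)
      fix \<psi> \<sigma> assume n: "beta_normal (App P1 P2)" and t: "has_type ord \<Omega> (App P1 P2) \<psi>"
        and g: "good_sub ord \<Omega> n (App P1 P2) \<sigma>"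
      from n have n1: "beta_normal P1" and n2: "beta_normal P2" and nl: "\<forall>x Q. P1 \<noteq> Lam x Q"
        by auto
      from t obtain \<chi>1 where t1: "has_type ord \<Omega> P1 (Imp \<chi>1 \<psi>)" and t2: "has_type ord \<Omega> P2 \<chi>1"
        and h: "HRM ord (App P1 P2)"
        by (auto elim: tyAppE)
      from h have dP: "\<forall>x\<in>fv P1. \<exists>y\<in>fv P2. ord x \<le> ord y" by (auto elim: hrmAppE)
      have g1: "good_sub ord \<Omega> n P1 \<sigma>" and g2: "good_sub ord \<Omega> n P2 \<sigma>"
        using g unfolding good_sub_def by auto
      obtain R1 where R1: "beta_normal R1" "has_type ord \<Omega> R1 (Imp \<chi>1 \<psi>)"
        "fv R1 = (\<Union>v\<in>fv P1. fv (\<sigma> v))"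
        "(\<exists>y S. R1 = Lam y S) \<longrightarrow> (\<exists>y S. P1 = Lam y S) \<or> size (Imp \<chi>1 \<psi>) \<le> n"
        using App.IH(1)[rule_format, OF n1 t1 g1] by (elim exE conjE) (rule that; assumption)
      obtain R2 where R2: "beta_normal R2" "has_type ord \<Omega> R2 \<chi>1"
        "fv R2 = (\<Union>v\<in>fv P2. fv (\<sigma> v))"
        using App.IH(2)[rule_format, OF n2 t2 g2] by (elim exE conjE) (rule that; assumption)
      have dm: "dominated ord (fv R1) (fv R2)"
        unfolding dominated_def
      proof
        fix c assume "c \<in> fv R1"
        then obtain a where a: "a \<in> fv P1" "c \<in> fv (\<sigma> a)" using R1(3) by auto
        then obtain b where b: "b \<in> fv P2" "ord a \<le> ord b" using dP by blast
        have "dominated ord (fv (\<sigma> a)) (fv (\<sigma> b))" using g a b unfolding good_sub_def by auto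
        then obtain d where "d \<in> fv (\<sigma> b)" "ord c \<le> ord d" using a unfolding dominated_def by blast
        thus "\<exists>d\<in>fv R2. ord c \<le> ord d" using R2(3) b by auto
      qed
      show "\<exists>R. beta_normal R \<and> has_type ord \<Omega> R \<psi> \<and> fv R = (\<Union>v\<in>fv (App P1 P2). fv (\<sigma> v)) \<and>
        ((\<exists>y S. R = Lam y S) \<longrightarrow> (\<exists>y S. App P1 P2 = Lam y S) \<or> size \<psi> \<le> n)"
      proof (cases "\<exists>y S. R1 = Lam y S")
        case False
        have hR: "HRM ord (App R1 R2)"
          using typed_HRM[OF R1(2)] typed_HRM[OF R2(2)] dm
          by (auto intro!: HRM_App simp: dominated_def)
        have "has_type ord \<Omega> (App R1 R2) \<psi>" by (rule ty_App[OF R1(2) R2(2) hR])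
        then show ?thesis
          by (intro exI[of _ "App R1 R2"]) (use False R1 R2 in auto)
      next
        case True
        then obtain y S where RL: "R1 = Lam y S" by blast
        have szl: "size (Imp \<chi>1 \<psi>) \<le> n" using R1(4) True nl by blast
        have "SUBST ord \<Omega> (size \<chi>1)"
          using less.IH[of "size \<chi>1"] szl by simp
        then obtain R where R: "beta_normal R" "has_type ord \<Omega> R \<psi>" "fv R = fv (Lam y S) \<union> fv R2"
          using redex[OF inj, of \<Omega> "size \<chi>1" \<chi>1 S y \<psi> R2] R1 R2 RL dm by auto
        show ?thesis
          by (intro exI[of _ R]) (use R R1(3) R2(3) RL szl in auto)
      qed
    qed
  qed
  show ?case unfolding SUBST_def using main by blast
qed

lemma normalize:
  fixes ord :: "'v \<Rightarrow> nat" and \<Omega> :: "'v \<Rightarrow> 'a form"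
  assumes inj: "inj ord" and fib: "\<forall>\<psi>. infinite (\<Omega> -` {\<psi>})"
  shows "has_type ord \<Omega> M t \<Longrightarrow> \<exists>N. beta_normal N \<and> has_type ord \<Omega> N t \<and> fv N = fv M"
proof (induction rule: has_type.induct)
  case (ty_Var x)
  then show ?case by (intro exI[of _ "Var x"]) (auto intro: has_type.ty_Var)
next
  case (ty_Lam x \<chi> M \<psi>)
  then obtain N where N: "beta_normal N" "has_type ord \<Omega> N \<psi>" "fv N = fv M" by blast
  from ty_Lam.hyps(3) have "x \<in> fv M" "\<forall>y\<in>fv M. ord y \<le> ord x" by (auto elim: hrmLamE)
  hence h: "HRM ord (Lam x N)" using typed_HRM[OF N(2)] N(3) by (auto intro: HRM_Lam)
  have "has_type ord \<Omega> (Lam x N) (Imp \<chi> \<psi>)" by (rule has_type.ty_Lam[OF ty_Lam.hyps(1) N(2) h])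
  then show ?case using N by (intro exI[of _ "Lam x N"]) auto
next
  case (ty_App M \<chi> \<psi> N)
  then obtain N1 N2 where N1: "beta_normal N1" "has_type ord \<Omega> N1 (Imp \<chi> \<psi>)" "fv N1 = fv M"
    and N2: "beta_normal N2" "has_type ord \<Omega> N2 \<chi>" "fv N2 = fv N" by blast
  from ty_App.hyps(3) have dm: "dominated ord (fv N1) (fv N2)"
    using N1(3) N2(3) by (auto elim: hrmAppE simp: dominated_def)
  show ?case
  proof (cases "\<exists>y S. N1 = Lam y S")
    case False
    have hR: "HRM ord (App N1 N2)"
      using typed_HRM[OF N1(2)] typed_HRM[OF N2(2)] dm
      by (auto intro!: HRM_App simp: dominated_def)
    have "has_type ord \<Omega> (App N1 N2) \<psi>" by (rule has_type.ty_App[OF N1(2) N2(2) hR])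
    then show ?thesis using False N1 N2 by (intro exI[of _ "App N1 N2"]) auto
  next
    case True
    then obtain y S where RL: "N1 = Lam y S" by blast
    have "\<exists>R. beta_normal R \<and> has_type ord \<Omega> R \<psi> \<and> fv R = fv (Lam y S) \<union> fv N2"
      by (rule redex[OF inj subst_all[OF inj fib] order_refl]) (use N1 N2 RL dm in auto)
    then obtain R where R: "beta_normal R" "has_type ord \<Omega> R \<psi>" "fv R = fv (Lam y S) \<union> fv N2"
      by blast
    then show ?thesis using N1(3) N2(3) RL by (intro exI[of _ R]) auto
  qed
qed

lemma rename:
  fixes ord :: "'v \<Rightarrow> nat"
  assumes inj: "inj ord" and fib: "\<forall>\<psi>. infinite (\<Omega> -` {\<psi>})"
  shows "\<forall>\<rho> \<psi> A. beta_normal P \<longrightarrow> has_type ord \<Omega> P \<psi> \<longrightarrow> (\<forall>v\<in>fv P. \<Omega> (\<rho> v) = \<Omega> v) \<longrightarrow>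
    (\<forall>a\<in>fv P. \<forall>b\<in>fv P. ord a \<le> ord b \<longrightarrow> ord (\<rho> a) \<le> ord (\<rho> b)) \<longrightarrow> finite A \<longrightarrow>
    (\<exists>R. beta_normal R \<and> has_type ord \<Omega> R \<psi> \<and> fv R = \<rho> ` fv P \<and> var_conv R \<and>
       set (bvs R) \<inter> A = {} \<and> ((\<exists>y S. R = Lam y S) \<longrightarrow> (\<exists>y S. P = Lam y S)))"
proof (induction P)
  case (Var v)
  show ?case
  proof (intro allI impI)
    fix \<rho> \<psi> and A :: "'v set" assume t: "has_type ord \<Omega> (Var v) \<psi>" and o: "\<forall>v'\<in>fv (Var v). \<Omega> (\<rho> v') = \<Omega> v'"
    from t have "\<psi> = \<Omega> v" by (auto elim: tyVarE)
    hence "has_type ord \<Omega> (Var (\<rho> v)) \<psi>" using o has_type.ty_Var[of ord \<Omega> "\<rho> v"] by simp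
    thus "\<exists>R. beta_normal R \<and> has_type ord \<Omega> R \<psi> \<and> fv R = \<rho> ` fv (Var v) \<and> var_conv R \<and>
       set (bvs R) \<inter> A = {} \<and> ((\<exists>y S. R = Lam y S) \<longrightarrow> (\<exists>y S. Var v = Lam y S))"
      by (intro exI[of _ "Var (\<rho> v)"]) (auto simp: var_conv_def)
  qed
next
  case (Lam z P0)
  show ?case
  proof (intro allI impI)
    fix \<rho> \<psi> and A :: "'v set" assume n: "beta_normal (Lam z P0)" and t: "has_type ord \<Omega> (Lam z P0) \<psi>"
      and o: "\<forall>v\<in>fv (Lam z P0). \<Omega> (\<rho> v) = \<Omega> v"
      and m: "\<forall>a\<in>fv (Lam z P0). \<forall>b\<in>fv (Lam z P0). ord a \<le> ord b \<longrightarrow> ord (\<rho> a) \<le> ord (\<rho> b)"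
      and fA: "finite A"
    from t obtain \<chi> \<psi>0 where psi: "\<psi> = Imp \<chi> \<psi>0" and oz: "\<Omega> z = \<chi>"
      and t0: "has_type ord \<Omega> P0 \<psi>0" and h: "HRM ord (Lam z P0)"
      using tyLam_inv[OF t] by blast
    from h have zin: "z \<in> fv P0" and zmax: "\<forall>w\<in>fv P0. ord w \<le> ord z"
      by (auto elim: hrmLamE)
    define F where "F = \<rho> ` fv (Lam z P0)"
    have fF: "finite F" unfolding F_def using finite_fv by auto
    obtain z' where z': "\<Omega> z' = \<Omega> z" "z' \<notin> A \<union> F" "\<forall>y\<in>F. ord y < ord z'"
      using fresh_big[OF inj fib _ fF, of "A \<union> F"] fA fF by blast
    define \<rho>' where "\<rho>' = \<rho>(z := z')"
    have o': "\<forall>v\<in>fv P0. \<Omega> (\<rho>' v) = \<Omega> v" using o z' by (auto simp: \<rho>'_def)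
    have m': "\<forall>a\<in>fv P0. \<forall>b\<in>fv P0. ord a \<le> ord b \<longrightarrow> ord (\<rho>' a) \<le> ord (\<rho>' b)"
    proof (intro ballI impI)
      fix a b assume a: "a \<in> fv P0" and b: "b \<in> fv P0" and ab: "ord a \<le> ord b"
      show "ord (\<rho>' a) \<le> ord (\<rho>' b)"
      proof (cases "b = z")
        case True
        show ?thesis
        proof (cases "a = z")
          case True then show ?thesis using \<open>b = z\<close> by simp
        next
          case False
          then have "\<rho> a \<in> F" using a by (auto simp: F_def)
          then show ?thesis using False True z'(3) by (auto simp: \<rho>'_def less_imp_le)
        qed
      next
        case False
        have "a \<noteq> z"
        proof
          assume "a = z"
          then have "ord b = ord z" using ab zmax b by force
          then show False using inj False by (auto dest: injD)
        qed
        then show ?thesis using False ab m a b by (auto simp: \<rho>'_def)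
      qed
    qed
    from n have n0: "beta_normal P0" by simp
    have fA': "finite (insert z' A)" using fA by simp
    obtain R0 where R0: "beta_normal R0" "has_type ord \<Omega> R0 \<psi>0" "fv R0 = \<rho>' ` fv P0"
      "var_conv R0" "set (bvs R0) \<inter> insert z' A = {}"
      using mp[OF mp[OF mp[OF mp[OF mp[OF Lam.IH[THEN spec[where x=\<rho>'], THEN spec[where x=\<psi>0], THEN spec[where x="insert z' A"]] n0] t0] o'] m'] fA'] by (elim exE conjE) (rule that; assumption)
    have fR0: "fv R0 = insert z' F"
      using R0(3) zin by (auto simp: F_def \<rho>'_def image_iff)
    have hR: "HRM ord (Lam z' R0)"
      using typed_HRM[OF R0(2)] fR0 z'(3) by (auto intro!: HRM_Lam simp: less_imp_le)
    have tR: "has_type ord \<Omega> (Lam z' R0) \<psi>"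
      unfolding psi
      by (rule has_type.ty_Lam) (use z' oz R0(2) hR has_type.ty_Var[of ord \<Omega> z'] in auto)
    have vc: "var_conv (Lam z' R0)"
      using R0(4,5) fR0 by (auto simp: var_conv_def)
    show "\<exists>R. beta_normal R \<and> has_type ord \<Omega> R \<psi> \<and> fv R = \<rho> ` fv (Lam z P0) \<and> var_conv R \<and>
       set (bvs R) \<inter> A = {} \<and> ((\<exists>y S. R = Lam y S) \<longrightarrow> (\<exists>y S. Lam z P0 = Lam y S))"
      by (rule exI[of _ "Lam z' R0"]) (use R0(1,5) tR fR0 z'(2) vc in \<open>auto simp: F_def\<close>)
  qed
next
  case (App P1 P2)
  show ?case
  proof (intro allI impI)
    fix \<rho> \<psi> and A :: "'v set" assume n: "beta_normal (App P1 P2)" and t: "has_type ord \<Omega> (App P1 P2) \<psi>"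
      and o: "\<forall>v\<in>fv (App P1 P2). \<Omega> (\<rho> v) = \<Omega> v"
      and m: "\<forall>a\<in>fv (App P1 P2). \<forall>b\<in>fv (App P1 P2). ord a \<le> ord b \<longrightarrow> ord (\<rho> a) \<le> ord (\<rho> b)"
      and fA: "finite A"
    from n have n1: "beta_normal P1" and n2: "beta_normal P2" and nl: "\<forall>x Q. P1 \<noteq> Lam x Q"
      by auto
    from t obtain \<chi>1 where t1: "has_type ord \<Omega> P1 (Imp \<chi>1 \<psi>)" and t2: "has_type ord \<Omega> P2 \<chi>1"
      and h: "HRM ord (App P1 P2)"
      by (auto elim: tyAppE)
    from h have dP: "\<forall>x\<in>fv P1. \<exists>y\<in>fv P2. ord x \<le> ord y" by (auto elim: hrmAppE)
    have o1: "\<forall>v\<in>fv P1. \<Omega> (\<rho> v) = \<Omega> v" and o2: "\<forall>v\<in>fv P2. \<Omega> (\<rho> v) = \<Omega> v" using o by auto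
    have m1: "\<forall>a\<in>fv P1. \<forall>b\<in>fv P1. ord a \<le> ord b \<longrightarrow> ord (\<rho> a) \<le> ord (\<rho> b)"
      and m2: "\<forall>a\<in>fv P2. \<forall>b\<in>fv P2. ord a \<le> ord b \<longrightarrow> ord (\<rho> a) \<le> ord (\<rho> b)" using m by auto
    define F where "F = \<rho> ` fv (App P1 P2)"
    have fF: "finite F" unfolding F_def using finite_fv by auto
    have fA1: "finite (A \<union> F)" using fA fF by simp
    obtain R1 where R1: "beta_normal R1" "has_type ord \<Omega> R1 (Imp \<chi>1 \<psi>)" "fv R1 = \<rho> ` fv P1"
      "var_conv R1" "set (bvs R1) \<inter> (A \<union> F) = {}" "(\<exists>y S. R1 = Lam y S) \<longrightarrow> (\<exists>y S. P1 = Lam y S)"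
      using mp[OF mp[OF mp[OF mp[OF mp[OF App.IH(1)[THEN spec[where x=\<rho>], THEN spec[where x="Imp \<chi>1 \<psi>"], THEN spec[where x="A \<union> F"]] n1] t1] o1] m1] fA1] by (elim exE conjE) (rule that; assumption)
    have fA2: "finite (A \<union> F \<union> set (bvs R1))" using fA1 by simp
    obtain R2 where R2: "beta_normal R2" "has_type ord \<Omega> R2 \<chi>1" "fv R2 = \<rho> ` fv P2"
      "var_conv R2" "set (bvs R2) \<inter> (A \<union> F \<union> set (bvs R1)) = {}"
      using mp[OF mp[OF mp[OF mp[OF mp[OF App.IH(2)[THEN spec[where x=\<rho>], THEN spec[where x=\<chi>1], THEN spec[where x="A \<union> F \<union> set (bvs R1)"]] n2] t2] o2] m2] fA2] by (elim exE conjE) (rule that; assumption)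
    have nl1: "\<forall>x Q. R1 \<noteq> Lam x Q" using R1(6) nl by blast
    have dR: "\<forall>c\<in>fv R1. \<exists>d\<in>fv R2. ord c \<le> ord d"
    proof
      fix c assume "c \<in> fv R1"
      then obtain a where a: "a \<in> fv P1" "c = \<rho> a" using R1(3) by auto
      then obtain b where b: "b \<in> fv P2" "ord a \<le> ord b" using dP by blast
      have "ord (\<rho> a) \<le> ord (\<rho> b)" using m a(1) b by auto
      thus "\<exists>d\<in>fv R2. ord c \<le> ord d" using R2(3) b(1) a(2) by auto
    qed
    have hR: "HRM ord (App R1 R2)"
      by (rule HRM_App[OF typed_HRM[OF R1(2)] typed_HRM[OF R2(2)] dR])
    have tR: "has_type ord \<Omega> (App R1 R2) \<psi>" by (rule has_type.ty_App[OF R1(2) R2(2) hR])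
    have s1: "set (bvs R1) \<inter> fv R2 = {}" using R1(5) R2(3) by (auto simp: F_def)
    have s2: "set (bvs R2) \<inter> fv R1 = {}" using R2(5) R1(3) by (auto simp: F_def)
    have s3: "set (bvs R1) \<inter> set (bvs R2) = {}" using R2(5) by auto
    have vc: "var_conv (App R1 R2)"
      using R1(4) R2(4) s1 s2 s3 unfolding var_conv_def by auto
    show "\<exists>R. beta_normal R \<and> has_type ord \<Omega> R \<psi> \<and> fv R = \<rho> ` fv (App P1 P2) \<and> var_conv R \<and>
       set (bvs R) \<inter> A = {} \<and> ((\<exists>y S. R = Lam y S) \<longrightarrow> (\<exists>y S. App P1 P2 = Lam y S))"
      by (rule exI[of _ "App R1 R2"]) (use R1(1,3,5) R2(1,3,5) nl1 tR vc in \<open>auto simp: image_Un\<close>)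
  qed
qed

theorem lemma1p6:
  fixes ord :: "'v \<Rightarrow> nat" and \<Omega> :: "'v \<Rightarrow> 'a form"
    and \<phi> :: "'a form" and M :: "'v trm"
  assumes "infinite (UNIV :: 'v set)"
    and "inj ord"
    and "\<forall>\<psi>. infinite (\<Omega> -` {\<psi>})"
    and "var_conv M"
    and "closed M"
    and "has_type ord \<Omega> M \<phi>"
  shows "NF_inhabited ord \<Omega> \<phi>"
proof -
  obtain N where N: "beta_normal N" "has_type ord \<Omega> N \<phi>" "fv N = fv M"
    using normalize[OF assms(2,3) assms(6)] by blast
  have fvN: "fv N = {}" using N(3) assms(5) by (simp add: closed_def)
  obtain R where R: "beta_normal R" "has_type ord \<Omega> R \<phi>" "fv R = id ` fv N" "var_conv R"
    using rename[OF assms(2,3), rule_format, OF N(1,2), of id "{}"] by auto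
  have "NF_inhabitant ord \<Omega> R \<phi>"
    using R fvN by (simp add: NF_inhabitant_def closed_def)
  thus ?thesis unfolding NF_inhabited_def by blast
qed

end
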